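(* For all non-negative integers $k$ and $n$, every weak embedding $f$ of $L_2(k)$ into $L_2(n)$ is distance-preserving: for all $x,y\in L_2(k)$, the distance between $x$ and $y$ in the Hasse diagram of $L_2(k)$ equals the distance between $f(x)$ and $f(y)$ in the Hasse diagram of $L_2(n)$.
   Context: $B_m$ denotes the Boolean lattice of all subsets of $\{1,\dots,m\}$ ordered by inclusion; its $j$-th level is the family of $j$-element subsets. $L_2(m)$ denotes the subposet of $B_m$ induced by the union of its two middle levels, namely levels $\lfloor (m-1)/2\rfloor$ and $\lfloor (m+1)/2\rfloor$. An injective map $f$ from a poset $P$ to a poset $Q$ is a weak embedding if $p\le q$ implies $f(p)\le f(q)$. The Hasse diagram of a poset is the graph on its elements in which $p,q$ are adjacent iff one covers the other (they are comparable and no element lies strictly between them); distance means graph distance in the Hasse diagram. *)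

theory Defs
  imports Main "HOL-Library.Extended_Nat"
begin

definition level :: "nat \<Rightarrow> nat \<Rightarrow> nat set set" where
  "level m j = {A. A \<subseteq> {1..m} \<and> card A = j}"

text \<open>L_2(m): union of levels floor((m-1)/2) and floor((m+1)/2) (computed over the integers;
  a negative level is empty), ordered by inclusion.\<close>
definition L2 :: "nat \<Rightarrow> nat set set" where
  "L2 m = {A. A \<subseteq> {1..m} \<and>
     (int (card A) = \<lfloor>(real m - 1) / 2\<rfloor> \<or> int (card A) = \<lfloor>(real m + 1) / 2\<rfloor>)}"

definition covers :: "'a set set \<Rightarrow> 'a set \<Rightarrow> 'a set \<Rightarrow> bool" where
  "covers P p q \<longleftrightarrow> p \<in> P \<and> q \<in> P \<and> p \<subset> q \<and> \<not> (\<exists>r\<in>P. p \<subset> r \<and> r \<subset> q)"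

definition hasse_adj :: "'a set set \<Rightarrow> 'a set \<Rightarrow> 'a set \<Rightarrow> bool" where
  "hasse_adj P p q \<longleftrightarrow> covers P p q \<or> covers P q p"

text \<open>Graph distance in the Hasse diagram (infinity if no path).\<close>
definition hasse_dist :: "'a set set \<Rightarrow> 'a set \<Rightarrow> 'a set \<Rightarrow> enat" where
  "hasse_dist P x y = (INF n \<in> {n. \<exists>g :: nat \<Rightarrow> 'a set. g 0 = x \<and> g n = y \<and>
       (\<forall>i<n. hasse_adj P (g i) (g (Suc i)))}. enat n)"

definition weak_embedding :: "'a set set \<Rightarrow> 'b set set \<Rightarrow> ('a set \<Rightarrow> 'b set) \<Rightarrow> bool" where
  "weak_embedding P Q f \<longleftrightarrow> f ` P \<subseteq> Q \<and> inj_on f P \<and>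
     (\<forall>p\<in>P. \<forall>q\<in>P. p \<subseteq> q \<longrightarrow> f p \<subseteq> f q)"

end

theory Submission
  imports Defs
begin


lemma floor_half1: "\<lfloor>(real m - 1) / 2\<rfloor> = (int m - 1) div 2"
proof -
  have "(real m - 1) / 2 = real_of_int (int m - 1) / real_of_int 2" by simp
  then show ?thesis by (metis floor_divide_of_int_eq)
qed

lemma floor_half2: "\<lfloor>(real m + 1) / 2\<rfloor> = (int m + 1) div 2"
proof -
  have "(real m + 1) / 2 = real_of_int (int m + 1) / real_of_int 2" by simp
  then show ?thesis by (metis floor_divide_of_int_eq)
qed

lemma L2_alt: "L2 m = {A. A \<subseteq> {1..m} \<and> (card A = (m-1) div 2 \<or> card A = (m+1) div 2)}"
  unfolding L2_def floor_half1 floor_half2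
proof (rule Collect_cong)
  fix A :: "nat set"
  have e1: "(int (card A) = (int m - 1) div 2) \<longleftrightarrow> (m \<ge> 1 \<and> card A = (m-1) div 2)"
    by (cases m) (auto simp: zdiv_int[symmetric])
  have e2: "(int (card A) = (int m + 1) div 2) \<longleftrightarrow> card A = (m+1) div 2"
    by (metis of_nat_1 of_nat_add of_nat_eq_iff zdiv_int numeral_2_eq_2 of_nat_numeral)
  show "(A \<subseteq> {1..m} \<and> (int (card A) = (int m - 1) div 2 \<or> int (card A) = (int m + 1) div 2)) =
    (A \<subseteq> {1..m} \<and> (card A = (m - 1) div 2 \<or> card A = (m + 1) div 2))"
    unfolding e1 e2 by (cases m) auto
qed

definition sd :: "'a set \<Rightarrow> 'a set \<Rightarrow> 'a set" where "sd A B = (A - B) \<union> (B - A)"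

lemma L2_fin: "A \<in> L2 m \<Longrightarrow> finite A"
  unfolding L2_alt by (auto intro: finite_subset)

lemma L2_strict: assumes "A \<in> L2 m" "B \<in> L2 m" "A \<subset> B" shows "card B = Suc (card A)"
proof -
  have "card A < card B" using assms L2_fin psubset_card_mono by blast
  moreover have "(m+1) div 2 \<le> Suc ((m-1) div 2)" by arith
  moreover have "card A = (m-1) div 2 \<or> card A = (m+1) div 2" "card B = (m-1) div 2 \<or> card B = (m+1) div 2"
    using assms(1,2) unfolding L2_alt by auto
  ultimately show ?thesis by linarith
qed

lemma covers_L2: "covers (L2 m) p q \<longleftrightarrow> p \<in> L2 m \<and> q \<in> L2 m \<and> p \<subset> q"
proof
  assume "p \<in> L2 m \<and> q \<in> L2 m \<and> p \<subset> q"
  moreover have "\<not> (\<exists>r\<in>L2 m. p \<subset> r \<and> r \<subset> q)"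
  proof
    assume "\<exists>r\<in>L2 m. p \<subset> r \<and> r \<subset> q"
    then obtain r where "r \<in> L2 m" "p \<subset> r" "r \<subset> q" by blast
    moreover note pq = \<open>p \<in> L2 m \<and> q \<in> L2 m \<and> p \<subset> q\<close>
    ultimately have "card r = Suc (card p)" "card q = Suc (card r)" "card q = Suc (card p)"
      using L2_strict by blast+
    then show False by simp
  qed
  ultimately show "covers (L2 m) p q" unfolding covers_def by blast
qed (auto simp: covers_def)

lemma adj_L2: "hasse_adj (L2 m) p q \<longleftrightarrow> p \<in> L2 m \<and> q \<in> L2 m \<and> (p \<subset> q \<or> q \<subset> p)"
  unfolding hasse_adj_def covers_L2 by (intro iffI; elim disjE conjE; simp)

lemma sd_tri: "finite A \<Longrightarrow> finite B \<Longrightarrow> finite C \<Longrightarrow> card (sd A C) \<le> card (sd A B) + card (sd B C)"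
proof -
  assume f: "finite A" "finite B" "finite C"
  have "sd A C \<subseteq> sd A B \<union> sd B C" unfolding sd_def by blast
  then have "card (sd A C) \<le> card (sd A B \<union> sd B C)" using f by (intro card_mono) (auto simp: sd_def)
  also have "\<dots> \<le> card (sd A B) + card (sd B C)" by (rule card_Un_le)
  finally show ?thesis .
qed

lemma adj_sd: assumes "hasse_adj (L2 m) p q" shows "card (sd p q) = 1"
proof -
  { fix p q assume a: "p \<in> L2 m" "q \<in> L2 m" "p \<subset> q"
    then have c: "card q = Suc (card p)" by (rule L2_strict)
    have "sd p q = q - p" using a unfolding sd_def by blast
    then have "card (sd p q) = 1" using c a L2_fin[of q m] L2_fin[of p m] card_Diff_subset[of p q] by simp }
  moreover have "sd p q = sd q p" unfolding sd_def by blast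
  ultimately show ?thesis using assms unfolding adj_L2 by metis
qed

lemma dist_lower: assumes "x \<in> L2 m" shows "enat (card (sd x y)) \<le> hasse_dist (L2 m) x y"
  unfolding hasse_dist_def
proof (rule INF_greatest)
  fix N assume "N \<in> {n. \<exists>g :: nat \<Rightarrow> nat set. g 0 = x \<and> g n = y \<and>
       (\<forall>i<n. hasse_adj (L2 m) (g i) (g (Suc i)))}"
  then obtain g where g: "g 0 = x" "g N = y" "\<forall>i<N. hasse_adj (L2 m) (g i) (g (Suc i))" by blast
  have "i \<le> N \<Longrightarrow> g i \<in> L2 m \<and> card (sd x (g i)) \<le> i" for i
  proof (induction i)
    case 0 then show ?case using g assms by (simp add: sd_def)
  next
    case (Suc i)
    then have ad: "hasse_adj (L2 m) (g i) (g (Suc i))" using g by simp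
    then have m: "g (Suc i) \<in> L2 m" "g i \<in> L2 m" unfolding adj_L2 by auto
    have "card (sd x (g (Suc i))) \<le> card (sd x (g i)) + card (sd (g i) (g (Suc i)))"
      using m assms L2_fin by (intro sd_tri) auto
    then show ?case using adj_sd[OF ad] Suc m by auto
  qed
  then show "enat (card (sd x y)) \<le> enat N" using g by auto
qed




lemma neighbor: assumes x: "x \<in> L2 m" and y: "y \<in> L2 m" and c: "card (sd x y) = Suc N"
  shows "\<exists>x'. x' \<in> L2 m \<and> hasse_adj (L2 m) x x' \<and> card (sd x' y) = N"
proof -
  have fx: "finite x" "finite y" using x y L2_fin by auto
  have xy: "x \<noteq> y" using c by (auto simp: sd_def)
  have cy: "card y = (m-1) div 2 \<or> card y = (m+1) div 2" using y unfolding L2_alt by blast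
  have cx0: "card x = (m-1) div 2 \<or> card x = (m+1) div 2" using x unfolding L2_alt by blast
  have lv: "(m+1) div 2 = (m-1) div 2 \<or> (m+1) div 2 = Suc ((m-1) div 2)" by arith
  show ?thesis
  proof (cases "card x = Suc ((m-1) div 2)")
    case True
    have "\<not> x \<subseteq> y"
    proof
      assume "x \<subseteq> y"
      then have "x \<subset> y" using xy by blast
      then have "card y = Suc (card x)" by (rule L2_strict[OF x y])
      then show False using True cy lv by linarith
    qed
    then obtain a where a: "a \<in> x" "a \<notin> y" by blast
    define x' where "x' = x - {a}"
    have "card x' = (m-1) div 2" using True a fx unfolding x'_def by simp
    then have x'm: "x' \<in> L2 m" using x unfolding x'_def L2_alt by auto
    have "x' \<subset> x" using a unfolding x'_def by blast
    then have "hasse_adj (L2 m) x x'" unfolding adj_L2 using x x'm by blast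
    moreover have "sd x' y = sd x y - {a}" using a unfolding x'_def sd_def by auto
    then have "card (sd x' y) = N" using c a by (simp add: sd_def)
    ultimately show ?thesis using x'm by blast
  next
    case False
    then have cx: "card x = (m-1) div 2" using cx0 lv by linarith
    have "\<not> y \<subseteq> x"
    proof
      assume "y \<subseteq> x"
      then have "y \<subset> x" using xy by blast
      then have "card x = Suc (card y)" by (rule L2_strict[OF y x])
      then show False using cx cy lv by linarith
    qed
    then obtain b where b: "b \<in> y" "b \<notin> x" by blast
    then have bm: "b \<in> {1..m}" using y unfolding L2_alt by auto
    then have m1: "m \<ge> 1" by auto
    then have lv1: "(m+1) div 2 = Suc ((m-1) div 2)" by arith
    define x' where "x' = insert b x"
    have "card x' = (m+1) div 2" using cx b fx lv1 unfolding x'_def by simp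
    then have x'm: "x' \<in> L2 m" using x bm unfolding x'_def L2_alt by auto
    have "x \<subset> x'" using b unfolding x'_def by blast
    then have "hasse_adj (L2 m) x x'" unfolding adj_L2 using x x'm by blast
    moreover have "sd x' y = sd x y - {b}" using b unfolding x'_def sd_def by auto
    then have "card (sd x' y) = N" using c b by (simp add: sd_def)
    ultimately show ?thesis using x'm by blast
  qed
qed

lemma path_exists: "\<forall>x. x \<in> L2 m \<longrightarrow> card (sd x y) = N \<longrightarrow> y \<in> L2 m \<longrightarrow>
   (\<exists>g. g 0 = x \<and> g N = y \<and> (\<forall>i<N. hasse_adj (L2 m) (g i) (g (Suc i))))"
proof (induction N)
  case 0
  show ?case
  proof (intro allI impI)
    fix x assume "x \<in> L2 m" "card (sd x y) = 0" "y \<in> L2 m"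
    then have "finite (sd x y)" "card (sd x y) = 0" using L2_fin[of x m] L2_fin[of y m] unfolding sd_def by auto
    then have "sd x y = {}" by simp
    then have "x = y" unfolding sd_def by blast
    then show "\<exists>g. g 0 = x \<and> g 0 = y \<and> (\<forall>i<0. hasse_adj (L2 m) (g i) (g (Suc i)))" by auto
  qed
next
  case (Suc N)
  show ?case
  proof (intro allI impI)
    fix x assume x: "x \<in> L2 m" and c: "card (sd x y) = Suc N" and y: "y \<in> L2 m"
    obtain x' where x': "x' \<in> L2 m" "hasse_adj (L2 m) x x'" "card (sd x' y) = N"
      using neighbor[OF x y c] by blast
    obtain g where g: "g 0 = x'" "g N = y" "\<forall>i<N. hasse_adj (L2 m) (g i) (g (Suc i))"
      using Suc.IH[rule_format, OF x'(1) x'(3) y] by blast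
    define h where "h i = (if i = 0 then x else g (i - 1))" for i
    have "\<forall>i<Suc N. hasse_adj (L2 m) (h i) (h (Suc i))"
    proof (intro allI impI)
      fix i assume i: "i < Suc N"
      show "hasse_adj (L2 m) (h i) (h (Suc i))"
      proof (cases i)
        case 0 then show ?thesis using g x' by (simp add: h_def)
      next
        case (Suc j)
        then have "j < N" using i by simp
        then have "hasse_adj (L2 m) (g j) (g (Suc j))" using g(3) by blast
        then show ?thesis using Suc by (simp add: h_def)
      qed
    qed
    moreover have "h 0 = x" "h (Suc N) = y" using g by (simp_all add: h_def)
    ultimately show "\<exists>g. g 0 = x \<and> g (Suc N) = y \<and> (\<forall>i<Suc N. hasse_adj (L2 m) (g i) (g (Suc i)))"
      by blast
  qed
qed

lemma dist_upper: assumes "x \<in> L2 m" "y \<in> L2 m" shows "hasse_dist (L2 m) x y \<le> enat (card (sd x y))"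
proof -
  have "\<exists>g. g 0 = x \<and> g (card (sd x y)) = y \<and> (\<forall>i<card (sd x y). hasse_adj (L2 m) (g i) (g (Suc i)))"
    using path_exists[rule_format, OF assms(1) refl assms(2)] .
  then have "card (sd x y) \<in> {n. \<exists>g :: nat \<Rightarrow> nat set. g 0 = x \<and> g n = y \<and>
       (\<forall>i<n. hasse_adj (L2 m) (g i) (g (Suc i)))}" by (rule CollectI)
  then show ?thesis unfolding hasse_dist_def by (rule INF_lower)
qed

lemma dist_map: assumes "\<And>p q. hasse_adj P p q \<Longrightarrow> hasse_adj Q (f p) (f q)"
  shows "hasse_dist Q (f x) (f y) \<le> hasse_dist P x y"
  unfolding hasse_dist_def
proof (rule INF_greatest)
  fix N assume "N \<in> {n. \<exists>g :: nat \<Rightarrow> 'a set. g 0 = x \<and> g n = y \<and>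
       (\<forall>i<n. hasse_adj P (g i) (g (Suc i)))}"
  then obtain g where g: "g 0 = x" "g N = y" "\<forall>i<N. hasse_adj P (g i) (g (Suc i))" by blast
  have "(\<lambda>i. f (g i)) 0 = f x \<and> (\<lambda>i. f (g i)) N = f y \<and> (\<forall>i<N. hasse_adj Q ((\<lambda>i. f (g i)) i) ((\<lambda>i. f (g i)) (Suc i)))"
    using g assms by simp
  then have "N \<in> {n. \<exists>g :: nat \<Rightarrow> 'b set. g 0 = f x \<and> g n = f y \<and>
       (\<forall>i<n. hasse_adj Q (g i) (g (Suc i)))}" by (intro CollectI exI[of _ "\<lambda>i. f (g i)"])
  then show "(INF n \<in> {n. \<exists>g :: nat \<Rightarrow> 'b set. g 0 = f x \<and> g n = f y \<and>
       (\<forall>i<n. hasse_adj Q (g i) (g (Suc i)))}. enat n) \<le> enat N"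
    by (rule INF_lower)
qed

lemma dist_refl: "hasse_dist P x x = 0"
proof -
  have "0 \<in> {n. \<exists>g :: nat \<Rightarrow> 'a set. g 0 = x \<and> g n = x \<and>
       (\<forall>i<n. hasse_adj P (g i) (g (Suc i)))}" by (intro CollectI exI[of _ "\<lambda>i. x"]) simp
  then have "hasse_dist P x x \<le> enat 0" unfolding hasse_dist_def by (rule INF_lower)
  then show ?thesis by (metis le_zero_eq zero_enat_def)
qed




lemma one_more: assumes "A \<subset> B" "finite B" "card B = Suc (card A)" shows "\<exists>p. p \<notin> A \<and> B = insert p A"
proof -
  have "card (B - A) = 1" using assms card_Diff_subset[of A B] finite_subset[of A B] by auto
  then obtain p where "B - A = {p}" by (auto simp: card_1_singleton_iff)
  then show ?thesis using assms(1) by blast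
qed

lemma hex_set:
  assumes fin: "finite Lb" "finite Ubc"
    and s: "La \<subseteq> Uab" "Lb \<subseteq> Uab" "La \<subseteq> Uac" "Lc \<subseteq> Uac" "Lb \<subseteq> Ubc" "Lc \<subseteq> Ubc"
    and ne: "La \<noteq> Lb" "La \<noteq> Lc" "Uab \<noteq> Ubc"
    and c: "card Uab = Suc (card Lb)" "card Uac = Suc (card Lc)" "card Ubc = Suc (card Lb)"
      "card La = card Lb" "card La = card Lc"
    and Lb_Uab: "Lb \<subset> Uab" and Lc_Uac: "Lc \<subset> Uac" and finUac: "finite Uab" "finite Uac"
  shows "Uab - Lb = Uac - Lc"
proof -
  obtain p where p: "p \<notin> Lb" "Uab = insert p Lb" using one_more[OF Lb_Uab finUac(1) c(1)] by blast
  obtain q where q: "q \<notin> Lc" "Uac = insert q Lc" using one_more[OF Lc_Uac finUac(2) c(2)] by blast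
  have finLc: "finite Lc" using q finUac by simp
  have pa: "p \<in> La"
  proof (rule ccontr)
    assume "p \<notin> La"
    then have "La \<subseteq> Lb" using s(1) p by blast
    then have "La = Lb" using card_subset_eq[OF fin(1)] c(4) by blast
    then show False using ne by simp
  qed
  have qa: "q \<in> La"
  proof (rule ccontr)
    assume "q \<notin> La"
    then have "La \<subseteq> Lc" using s(3) q by blast
    then have "La = Lc" using card_subset_eq[OF finLc] c(5) by blast
    then show False using ne by simp
  qed
  have "p = q"
  proof (rule ccontr)
    assume "p \<noteq> q"
    then have "p \<in> Lc" using pa s(3) q by blast
    then have "insert p Lb \<subseteq> Ubc" using s(5,6) by blast
    moreover have "card (insert p Lb) = card Ubc" using p fin c(3) by simp
    ultimately have "insert p Lb = Ubc" using card_subset_eq[OF fin(2)] by blast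
    then show False using ne p by simp
  qed
  then show ?thesis using p q by auto
qed

locale wemb =
  fixes k n :: nat and f :: "nat set \<Rightarrow> nat set"
  assumes we: "weak_embedding (L2 k) (L2 n) f" and k1: "1 \<le> k"
begin

definition lo where "lo = (k - 1) div 2"

definition low where "low x \<longleftrightarrow> x \<subseteq> {1..k} \<and> card x = lo"

lemma L2k: "A \<in> L2 k \<longleftrightarrow> A \<subseteq> {1..k} \<and> (card A = lo \<or> card A = Suc lo)"
proof -
  have "(k+1) div 2 = Suc lo" using k1 unfolding lo_def by arith
  then show ?thesis unfolding L2_alt lo_def by auto
qed

lemma lo_lt: "lo < k" using k1 unfolding lo_def by arith

lemma low_L2: "low x \<Longrightarrow> x \<in> L2 k" unfolding low_def L2k by auto

lemma low_fin: "low x \<Longrightarrow> finite x" unfolding low_def by (auto intro: finite_subset)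

lemma we_img: "f ` L2 k \<subseteq> L2 n" and we_inj: "inj_on f (L2 k)"
  and we_mono: "\<forall>p\<in>L2 k. \<forall>q\<in>L2 k. p \<subseteq> q \<longrightarrow> f p \<subseteq> f q"
  using we unfolding weak_embedding_def by simp_all

lemma fL2: "A \<in> L2 k \<Longrightarrow> f A \<in> L2 n" using we_img by blast

lemma finj: "A \<in> L2 k \<Longrightarrow> B \<in> L2 k \<Longrightarrow> A \<noteq> B \<Longrightarrow> f A \<noteq> f B"
  using we_inj by (simp add: inj_on_eq_iff)

lemma fmono: assumes "A \<in> L2 k" "B \<in> L2 k" "A \<subset> B" shows "f A \<subset> f B"
proof -
  have "f A \<subseteq> f B" using we_mono assms by simp
  moreover have "f A \<noteq> f B" using finj assms by blast
  ultimately show ?thesis by blast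
qed

lemma up_L2: assumes "low x" "a \<in> {1..k}" "a \<notin> x" shows "insert a x \<in> L2 k"
  using assms low_fin unfolding low_def L2k by auto

lemma step: assumes "low x" "a \<in> {1..k}" "a \<notin> x"
  shows "\<exists>p. p \<notin> f x \<and> f (insert a x) = insert p (f x)"
proof -
  have m1: "x \<in> L2 k" using assms(1) by (rule low_L2)
  have m2: "insert a x \<in> L2 k" using assms by (rule up_L2)
  have "x \<subset> insert a x" using assms(3) by blast
  then have s: "f x \<subset> f (insert a x)" by (rule fmono[OF m1 m2])
  have c: "card (f (insert a x)) = Suc (card (f x))" by (rule L2_strict[OF fL2[OF m1] fL2[OF m2] s])
  show ?thesis by (rule one_more[OF s L2_fin[OF fL2[OF m2]] c])
qed

lemma hexagon: assumes x: "low x" and a: "a \<in> {1..k}" "a \<notin> x" and b: "b \<in> x"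
  and c: "c \<in> {1..k}" "c \<notin> x" "c \<noteq> a"
  shows "f (insert a x) - f x = f (insert a (insert c (x - {b}))) - f (insert c (x - {b}))"
proof -
  define S where "S = x - {b}"
  have fx: "finite x" using x low_fin by auto
  have ab: "a \<noteq> b" using a b by auto
  have cb: "c \<noteq> b" using c b by auto
  have cS: "card S = lo - 1" "finite S" using x b fx unfolding S_def low_def by auto
  have "card x > 0" using b fx card_gt_0_iff by blast
  then have lo1: "lo \<ge> 1" using x unfolding low_def by simp
  have sub: "S \<subseteq> {1..k}" "x \<subseteq> {1..k}" "b \<in> {1..k}" using x b unfolding S_def low_def by auto
  have aS: "a \<notin> S" "c \<notin> S" "b \<notin> S" using a c unfolding S_def by auto
  have xS: "x = insert b S" using b unfolding S_def by auto
  have mLa: "insert a S \<in> L2 k" using cS aS sub a lo1 unfolding L2k by auto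
  have mLb: "x \<in> L2 k" using x low_L2 by auto
  have mLc: "insert c S \<in> L2 k" using cS aS sub c lo1 unfolding L2k by auto
  have mUab: "insert a x \<in> L2 k" using cS aS sub a lo1 ab unfolding L2k xS by auto
  have mUac: "insert a (insert c S) \<in> L2 k" using cS aS sub a c lo1 unfolding L2k by auto
  have mUbc: "insert c x \<in> L2 k" using cS aS sub c cb lo1 unfolding L2k xS by auto
  let ?La = "f (insert a S)" and ?Lb = "f x" and ?Lc = "f (insert c S)"
  let ?Uab = "f (insert a x)" and ?Uac = "f (insert a (insert c S))" and ?Ubc = "f (insert c x)"
  have "insert a S \<subset> insert a x" using xS aS ab by auto
  then have s1: "?La \<subset> ?Uab" by (rule fmono[OF mLa mUab])
  have "x \<subset> insert a x" using a by auto
  then have s2: "?Lb \<subset> ?Uab" by (rule fmono[OF mLb mUab])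
  have "insert a S \<subset> insert a (insert c S)" using aS c by auto
  then have s3: "?La \<subset> ?Uac" by (rule fmono[OF mLa mUac])
  have "insert c S \<subset> insert a (insert c S)" using aS c by auto
  then have s4: "?Lc \<subset> ?Uac" by (rule fmono[OF mLc mUac])
  have "x \<subset> insert c x" using c by auto
  then have s5: "?Lb \<subset> ?Ubc" by (rule fmono[OF mLb mUbc])
  have "insert c S \<subset> insert c x" using xS aS cb by auto
  then have s6: "?Lc \<subset> ?Ubc" by (rule fmono[OF mLc mUbc])
  have "insert a S \<noteq> x" using a by auto
  then have n1: "?La \<noteq> ?Lb" by (rule finj[OF mLa mLb])
  have "insert a S \<noteq> insert c S" using aS c by auto
  then have n2: "?La \<noteq> ?Lc" by (rule finj[OF mLa mLc])
  have "insert a x \<noteq> insert c x" using a c by auto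
  then have n3: "?Uab \<noteq> ?Ubc" by (rule finj[OF mUab mUbc])
  have c1: "card ?Uab = Suc (card ?La)" using L2_strict[OF fL2[OF mLa] fL2[OF mUab] s1] .
  have c2: "card ?Uab = Suc (card ?Lb)" using L2_strict[OF fL2[OF mLb] fL2[OF mUab] s2] .
  have c3: "card ?Uac = Suc (card ?La)" using L2_strict[OF fL2[OF mLa] fL2[OF mUac] s3] .
  have c4: "card ?Uac = Suc (card ?Lc)" using L2_strict[OF fL2[OF mLc] fL2[OF mUac] s4] .
  have c5: "card ?Ubc = Suc (card ?Lb)" using L2_strict[OF fL2[OF mLb] fL2[OF mUbc] s5] .
  have fins: "finite ?Lb" "finite ?Ubc" "finite ?Uab" "finite ?Uac"
    using L2_fin fL2 mLb mUbc mUab mUac by blast+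
  have "?Uab - ?Lb = ?Uac - ?Lc"
    apply (rule hex_set[OF fins(1,2)])
    using s1 s2 s3 s4 s5 s6 n1 n2 n3 c1 c2 c3 c4 c5 fins(3,4)
    by (simp_all add: less_imp_le)
  then show ?thesis unfolding S_def .
qed

end



context wemb begin

lemma low_avoid: assumes "B \<subseteq> {1..k}" "card B + lo \<le> k" shows "\<exists>x. low x \<and> x \<inter> B = {}"
proof -
  have "card ({1..k} - B) = k - card B" using assms(1) by (simp add: card_Diff_subset finite_subset)
  then have "lo \<le> card ({1..k} - B)" using assms(2) by simp
  then obtain x where "x \<subseteq> {1..k} - B" "card x = lo" by (meson obtain_subset_with_card_n)
  then show ?thesis unfolding low_def by blast
qed

definition x0 where "x0 a = (SOME x. low x \<and> a \<notin> x)"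

lemma x0: assumes "a \<in> {1..k}" shows "low (x0 a)" "a \<notin> x0 a"
proof -
  have "\<exists>x. low x \<and> x \<inter> {a} = {}" using assms lo_lt by (intro low_avoid) auto
  then have "\<exists>x. low x \<and> a \<notin> x" by blast
  then have "low (x0 a) \<and> a \<notin> x0 a" unfolding x0_def by (rule someI_ex)
  then show "low (x0 a)" "a \<notin> x0 a" by auto
qed

definition sig where "sig a = the_elem (f (insert a (x0 a)) - f (x0 a))"

lemma swap_low: assumes x: "low x" and b: "b \<in> x" and c: "c \<in> {1..k}" "c \<notin> x"
  shows "low (insert c (x - {b}))"
proof -
  have fx: "finite x" using x low_fin by blast
  have "card (insert c (x - {b})) = Suc (card x - 1)" using fx b c by simp
  moreover have "card x > 0" using fx b card_gt_0_iff by blast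
  ultimately show ?thesis using x b c unfolding low_def by auto
qed

lemma D_const: assumes a: "a \<in> {1..k}"
  shows "\<forall>x. low x \<and> a \<notin> x \<and> card (x - x0 a) = N \<longrightarrow>
     f (insert a x) - f x = f (insert a (x0 a)) - f (x0 a)"
proof (induction N)
  case 0
  show ?case
  proof (intro allI impI)
    fix x assume h: "low x \<and> a \<notin> x \<and> card (x - x0 a) = 0"
    have fx: "finite x" "finite (x0 a)" using h x0[OF a] low_fin by auto
    then have "x - x0 a = {}" using h by simp
    then have "x \<subseteq> x0 a" by blast
    moreover have "card x = card (x0 a)" using h x0[OF a] unfolding low_def by simp
    ultimately have "x = x0 a" using card_subset_eq[OF fx(2)] by blast
    then show "f (insert a x) - f x = f (insert a (x0 a)) - f (x0 a)" by simp
  qed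
next
  case (Suc N)
  show ?case
  proof (intro allI impI)
    fix x assume h: "low x \<and> a \<notin> x \<and> card (x - x0 a) = Suc N"
    let ?X = "x0 a"
    have X: "low ?X" "a \<notin> ?X" using x0[OF a] by auto
    have fx: "finite x" "finite ?X" using h X low_fin by auto
    have "x - ?X \<noteq> {}" using h by (metis card.empty nat.distinct(1))
    then obtain b where b: "b \<in> x" "b \<notin> ?X" by blast
    have "?X - x \<noteq> {}"
    proof
      assume "?X - x = {}"
      then have "?X \<subseteq> x" by blast
      moreover have "card x = card ?X" using h X unfolding low_def by simp
      ultimately have "?X = x" using card_subset_eq[OF fx(1)] by metis
      then show False using b by simp
    qed
    then obtain c where c: "c \<in> ?X" "c \<notin> x" by blast
    have ca: "c \<noteq> a" using c X by auto
    have ck: "c \<in> {1..k}" using c X unfolding low_def by auto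
    define x' where "x' = insert c (x - {b})"
    have lx': "low x'" unfolding x'_def using swap_low h b ck c by blast
    have ax': "a \<notin> x'" unfolding x'_def using h ca by auto
    have "x' - ?X = (x - ?X) - {b}" unfolding x'_def using c by auto
    then have "card (x' - ?X) = N" using h b fx by simp
    then have "f (insert a x') - f x' = f (insert a ?X) - f ?X" using Suc.IH lx' ax' by blast
    moreover have "f (insert a x) - f x = f (insert a x') - f x'"
      unfolding x'_def using hexagon[of x a b c] h a b ck c ca by blast
    ultimately show "f (insert a x) - f x = f (insert a ?X) - f ?X" by simp
  qed
qed

lemma cons: assumes x: "low x" and a: "a \<in> {1..k}" "a \<notin> x"
  shows "f (insert a x) = insert (sig a) (f x)" "sig a \<notin> f x"
proof -
  obtain p where p: "p \<notin> f x" "f (insert a x) = insert p (f x)" using step[OF x a] by blast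
  have "f (insert a x) - f x = {p}" using p by auto
  moreover have "f (insert a x) - f x = f (insert a (x0 a)) - f (x0 a)"
    using D_const[OF a(1)] x a by blast
  ultimately have "sig a = p" unfolding sig_def by simp
  then show "f (insert a x) = insert (sig a) (f x)" "sig a \<notin> f x" using p by auto
qed

lemma sig_inj: "inj_on sig {1..k}"
proof (rule inj_onI)
  fix a b assume ab: "a \<in> {1..k}" "b \<in> {1..k}" "sig a = sig b"
  show "a = b"
  proof (rule ccontr)
    assume ne: "a \<noteq> b"
    then have "k \<ge> 2" using ab by auto
    then have "lo + 2 \<le> k" unfolding lo_def by arith
    moreover have "card {a, b} = 2" using ne by simp
    ultimately have "card {a, b} + lo \<le> k" by simp
    moreover have "{a,b} \<subseteq> {1..k}" using ab by simp
    ultimately obtain x where x: "low x" "x \<inter> {a,b} = {}" using low_avoid[of "{a,b}"] by blast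
    have a1: "a \<notin> x" "b \<notin> x" using x by auto
    have m: "insert a x \<in> L2 k" "insert b x \<in> L2 k" using up_L2[OF x(1) ab(1) a1(1)] up_L2[OF x(1) ab(2) a1(2)] by auto
    have "insert a x \<noteq> insert b x" using a1 ne by blast
    then have "f (insert a x) \<noteq> f (insert b x)" by (rule finj[OF m])
    moreover have "f (insert a x) = insert (sig a) (f x)" "f (insert b x) = insert (sig b) (f x)"
      using cons(1)[OF x(1) ab(1) a1(1)] cons(1)[OF x(1) ab(2) a1(2)] by auto
    ultimately show False using ab by simp
  qed
qed

lemma sig_sub: assumes x: "low x" shows "sig ` x \<subseteq> f x"
proof
  fix s assume "s \<in> sig ` x"
  then obtain a where a: "a \<in> x" "s = sig a" by blast
  have fx: "finite x" using x low_fin by blast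
  have "card ({1..k} - x) = k - lo" using x fx unfolding low_def by (simp add: card_Diff_subset)
  then have "card ({1..k} - x) > 0" using lo_lt by simp
  then obtain b where b: "b \<in> {1..k}" "b \<notin> x" by (metis Diff_iff card_gt_0_iff all_not_in_conv)
  define x' where "x' = insert b (x - {a})"
  have lx': "low x'" unfolding x'_def by (rule swap_low[OF x a(1) b])
  have ak: "a \<in> {1..k}" using x a unfolding low_def by auto
  have ab: "a \<noteq> b" using a b by auto
  have "a \<notin> x'" using a b unfolding x'_def by auto
  then have 1: "f (insert a x') = insert (sig a) (f x')" by (rule cons(1)[OF lx' ak])
  have 2: "insert a x' = insert b x" unfolding x'_def using a by auto
  have 3: "f (insert b x) = insert (sig b) (f x)" by (rule cons(1)[OF x b])
  have 4: "sig a \<noteq> sig b" using inj_on_eq_iff[OF sig_inj ak b(1)] ab by simp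
  have "sig a \<in> insert (sig b) (f x)" using 1 2 3 by (metis insertI1)
  then show "s \<in> f x" using a 4 by simp
qed

definition X1 where "X1 = (SOME x. low x)"
definition CC where "CC = f X1 - sig ` X1"

lemma X1: "low X1"
proof -
  have "\<exists>x. low x \<and> x \<inter> {} = {}" using lo_lt by (intro low_avoid) auto
  then have "\<exists>x. low x" by blast
  then show ?thesis unfolding X1_def by (rule someI_ex)
qed

lemma swapC: assumes x: "low x" and b: "b \<in> x" and c: "c \<in> {1..k}" "c \<notin> x"
  shows "f (insert c (x - {b})) - sig ` (insert c (x - {b})) = f x - sig ` x"
proof -
  define x' where "x' = insert c (x - {b})"
  have lx': "low x'" unfolding x'_def by (rule swap_low[OF x b c])
  have bk: "b \<in> {1..k}" using x b unfolding low_def by auto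
  have bx': "b \<notin> x'" using b c unfolding x'_def by auto
  have e: "insert b x' = insert c x" unfolding x'_def using b by auto
  have 1: "f (insert c x) = insert (sig c) (f x)" "sig c \<notin> f x" using cons[OF x c] by auto
  have 2: "f (insert b x') = insert (sig b) (f x')" "sig b \<notin> f x'" using cons[OF lx' bk bx'] by auto
  have fx': "f x' = insert (sig c) (f x) - {sig b}"
  proof -
    have "f x' = insert (sig b) (f x') - {sig b}" using 2(2) by simp
    also have "\<dots> = insert (sig c) (f x) - {sig b}" using 1(1) 2(1) e by simp
    finally show ?thesis .
  qed
  have sx': "sig ` x' = insert (sig c) (sig ` (x - {b}))" unfolding x'_def by simp
  have sx: "sig ` x = insert (sig b) (sig ` (x - {b}))" using b by blast
  have "f x' - sig ` x' = f x - sig ` x" unfolding sx sx' fx' using 1(2) by blast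
  then show ?thesis unfolding x'_def .
qed

lemma C_const: "\<forall>x. low x \<and> card (x - X1) = N \<longrightarrow> f x - sig ` x = CC"
proof (induction N)
  case 0
  show ?case
  proof (intro allI impI)
    fix x assume h: "low x \<and> card (x - X1) = 0"
    have fx: "finite x" "finite X1" using h X1 low_fin by auto
    then have "x \<subseteq> X1" using h by auto
    moreover have "card x = card X1" using h X1 unfolding low_def by simp
    ultimately have "x = X1" using card_subset_eq[OF fx(2)] by blast
    then show "f x - sig ` x = CC" unfolding CC_def by simp
  qed
next
  case (Suc N)
  show ?case
  proof (intro allI impI)
    fix x assume h: "low x \<and> card (x - X1) = Suc N"
    have fx: "finite x" "finite X1" using h X1 low_fin by auto
    have "x - X1 \<noteq> {}" using h by (metis card.empty nat.distinct(1))
    then obtain b where b: "b \<in> x" "b \<notin> X1" by blast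
    have "X1 - x \<noteq> {}"
    proof
      assume "X1 - x = {}"
      then have "X1 \<subseteq> x" by blast
      moreover have "card x = card X1" using h X1 unfolding low_def by simp
      ultimately have "X1 = x" using card_subset_eq[OF fx(1)] by metis
      then show False using b by simp
    qed
    then obtain c where c: "c \<in> X1" "c \<notin> x" by blast
    have ck: "c \<in> {1..k}" using c X1 unfolding low_def by auto
    define x' where "x' = insert c (x - {b})"
    have lx': "low x'" unfolding x'_def by (rule swap_low[OF conjunct1[OF h] b(1) ck c(2)])
    have "x' - X1 = (x - X1) - {b}" unfolding x'_def using c by auto
    then have "card (x' - X1) = N" using h b fx by simp
    then have "f x' - sig ` x' = CC" using Suc.IH lx' by blast
    moreover have "f x' - sig ` x' = f x - sig ` x" unfolding x'_def by (rule swapC[OF conjunct1[OF h] b(1) ck c(2)])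
    ultimately show "f x - sig ` x = CC" by simp
  qed
qed

lemma CC_disj: "CC \<inter> sig ` {1..k} = {}"
proof -
  { fix c assume c: "c \<in> {1..k}" "sig c \<in> CC"
    have "c \<notin> X1" using c unfolding CC_def by auto
    then have "sig c \<notin> f X1" using cons(2)[OF X1 c(1)] by blast
    then have False using c unfolding CC_def by auto }
  then show ?thesis by blast
qed

lemma form: assumes A: "A \<in> L2 k" shows "f A = sig ` A \<union> CC"
proof (cases "card A = lo")
  case True
  then have l: "low A" using A unfolding L2k low_def by auto
  have "f A - sig ` A = CC" using C_const[rule_format, OF conjI[OF l refl]] .
  then show ?thesis using sig_sub[OF l] by blast
next
  case False
  then have cA: "card A = Suc lo" using A unfolding L2k by auto
  then have "A \<noteq> {}" by auto
  then obtain a where a: "a \<in> A" by blast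
  have fA: "finite A" using A L2_fin by blast
  have l: "low (A - {a})" using A a fA cA unfolding L2k low_def by auto
  have ak: "a \<in> {1..k}" using A a unfolding L2k by auto
  have "a \<notin> A - {a}" by simp
  then have 1: "f (insert a (A - {a})) = insert (sig a) (f (A - {a}))" by (rule cons(1)[OF l ak])
  have 2: "insert a (A - {a}) = A" using a by blast
  have 3: "f (A - {a}) - sig ` (A - {a}) = CC" using C_const[rule_format, OF conjI[OF l refl]] .
  have 4: "sig ` (A - {a}) \<subseteq> f (A - {a})" using sig_sub[OF l] .
  have 5: "f (A - {a}) = sig ` (A - {a}) \<union> CC" using 3 4 by blast
  have "f A = insert (sig a) (sig ` (A - {a}) \<union> CC)" using 1 unfolding 2 5 .
  also have "\<dots> = sig ` A \<union> CC" using a by blast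
  finally show ?thesis .
qed

lemma card_sd: assumes A: "A \<in> L2 k" and B: "B \<in> L2 k" shows "card (sd (f A) (f B)) = card (sd A B)"
proof -
  have sA: "A \<subseteq> {1..k}" "B \<subseteq> {1..k}" using A B unfolding L2k by auto
  have d1: "CC \<inter> sig ` A = {}" "CC \<inter> sig ` B = {}" using CC_disj sA by blast+
  have "sd (f A) (f B) = sd (sig ` A) (sig ` B)" unfolding form[OF A] form[OF B] sd_def using d1 by blast
  also have "\<dots> = sig ` (sd A B)" unfolding sd_def image_Un
    using inj_on_image_set_diff[OF sig_inj, of A B] inj_on_image_set_diff[OF sig_inj, of B A] sA by auto
  also have "card \<dots> = card (sd A B)"
    by (rule card_image, rule inj_on_subset[OF sig_inj]) (use sA in \<open>auto simp: sd_def\<close>)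
  finally show ?thesis .
qed

lemma adj_pres: assumes h: "hasse_adj (L2 k) p q" shows "hasse_adj (L2 n) (f p) (f q)"
proof -
  have p: "p \<in> L2 k" and q: "q \<in> L2 k" and o: "p \<subset> q \<or> q \<subset> p" using h unfolding adj_L2 by auto
  have "f p \<subset> f q \<or> f q \<subset> f p" using o fmono[OF p q] fmono[OF q p] by blast
  then show ?thesis unfolding adj_L2 using fL2[OF p] fL2[OF q] by blast
qed

end

theorem mainTheorem8:
  fixes k n :: nat and f :: "nat set \<Rightarrow> nat set"
  assumes "weak_embedding (L2 k) (L2 n) f"
  shows "\<forall>x\<in>L2 k. \<forall>y\<in>L2 k. hasse_dist (L2 k) x y = hasse_dist (L2 n) (f x) (f y)"
proof (cases "k = 0")
  case True
  have "L2 k \<subseteq> {{}}" unfolding L2_alt True by auto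
  show ?thesis
  proof (intro ballI)
    fix x y assume "x \<in> L2 k" "y \<in> L2 k"
    then have "x = y" using \<open>L2 k \<subseteq> {{}}\<close> by blast
    then show "hasse_dist (L2 k) x y = hasse_dist (L2 n) (f x) (f y)" by (simp add: dist_refl)
  qed
next
  case False
  then interpret w: wemb k n f using assms by unfold_locales auto
  show ?thesis
  proof (intro ballI)
    fix x y assume x: "x \<in> L2 k" and y: "y \<in> L2 k"
    have 1: "hasse_dist (L2 k) x y \<le> enat (card (sd x y))" by (rule dist_upper[OF x y])
    have 2: "enat (card (sd (f x) (f y))) \<le> hasse_dist (L2 n) (f x) (f y)"
      by (rule dist_lower[OF w.fL2[OF x]])
    have 3: "hasse_dist (L2 n) (f x) (f y) \<le> hasse_dist (L2 k) x y"
      by (rule dist_map[OF w.adj_pres])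
    show "hasse_dist (L2 k) x y = hasse_dist (L2 n) (f x) (f y)"
    proof (rule order_antisym)
      show "hasse_dist (L2 k) x y \<le> hasse_dist (L2 n) (f x) (f y)"
        using 1 2 w.card_sd[OF x y] by simp
    qed (rule 3)
  qed
qed


end
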